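(* Let $a,b$ be real numbers with $b\ge a>1$. Then the functions $$W(t)=\sum_{j=0}^\infty a^{-j}\cos(b^jt),\qquad S(t)=\sum_{j=0}^\infty a^{-j}\sin(b^jt),\qquad t\in\mathbb{R},$$ are bounded and continuous on $\mathbb{R}$, but neither $W$ nor $S$ is differentiable at any point $t_0\in\mathbb{R}$. *)

theory Defs
  imports "HOL-Analysis.Analysis"
begin

definition weierstrass_W :: "real \<Rightarrow> real \<Rightarrow> real \<Rightarrow> real" where
  "weierstrass_W a b t = (\<Sum>j. a powr (- real j) * cos (b ^ j * t))"

definition weierstrass_S :: "real \<Rightarrow> real \<Rightarrow> real \<Rightarrow> real" where
  "weierstrass_S a b t = (\<Sum>j. a powr (- real j) * sin (b ^ j * t))"

end

theory Submission
  imports Defs "HOL-Probability.Characteristic_Functions"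
begin


abbreviation "NN \<equiv> std_normal_distribution"

lemma char_gauss: "(CLINT x|NN. iexp (\<eta> * x)) = complex_of_real (exp (- (\<eta>^2) / 2))"
  using char_std_normal_distribution[THEN fun_cong, of \<eta>] unfolding char_def by simp

lemma iexp_mult: "iexp a * iexp b = iexp (a + b)"
  by (simp add: exp_add[symmetric] distrib_left)

lemma cmod_iexp_minus1: "cmod (iexp t - 1) \<le> \<bar>t\<bar>"
  using iexp_approx1[of t 0] by simp

lemma prob_NN: "prob_space NN"
  using real_dist_normal_dist real_distribution_def by blast

lemma sets_NN[simp]: "sets NN = sets borel" by simp
lemma space_NN[simp]: "space NN = UNIV" by simp

lemma integrable_iexp_NN[simp]: "integrable NN (\<lambda>x. iexp (t * x))"
  using prob_space.integrable_iexp[OF prob_NN, of "\<lambda>x. complex_of_real (t * x)"] by simp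

lemma first_moment:
  "(CLINT x|NN. (\<i> * complex_of_real x) * iexp (\<eta> * x)) = complex_of_real (- \<eta> * exp (- (\<eta>^2) / 2))"
proof -
  define h where "h n = 1 / real (Suc n)" for n
  have h0: "h \<longlonglongrightarrow> 0" unfolding h_def using lim_1_over_n LIMSEQ_Suc by blast
  have hne: "h n \<noteq> 0" for n unfolding h_def by simp
  have hc: "filterlim (\<lambda>n. complex_of_real (h n)) (at 0) sequentially"
    by (rule filterlim_atI) (use tendsto_of_real[OF h0, where 'a=complex] hne in auto)
  have hr: "filterlim h (at 0) sequentially"
    by (rule filterlim_atI) (use h0 hne in auto)
  define D where "D n x = (iexp ((\<eta> + h n) * x) - iexp (\<eta> * x)) / complex_of_real (h n)" for n x
  have lim1: "(\<lambda>n. D n x) \<longlonglongrightarrow> (\<i> * complex_of_real x) * iexp (\<eta> * x)" for x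
  proof -
    have d: "DERIV (\<lambda>z. exp (\<i> * z * complex_of_real x)) 0 :> \<i> * complex_of_real x * exp (\<i> * 0 * complex_of_real x)"
      by (auto intro!: derivative_eq_intros)
    then have "((\<lambda>z. (exp (\<i> * (0 + z) * complex_of_real x) - exp (\<i> * 0 * complex_of_real x)) / z) \<longlongrightarrow> \<i> * complex_of_real x) (at 0)"
      unfolding DERIV_def by simp
    from filterlim_compose[OF this hc]
    have "(\<lambda>n. (exp (\<i> * complex_of_real (h n) * complex_of_real x) - 1) / complex_of_real (h n)) \<longlonglongrightarrow> \<i> * complex_of_real x"
      by simp
    then have "(\<lambda>n. iexp (\<eta> * x) * ((exp (\<i> * complex_of_real (h n) * complex_of_real x) - 1) / complex_of_real (h n))) \<longlonglongrightarrow> iexp (\<eta> * x) * (\<i> * complex_of_real x)"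
      by (intro tendsto_mult tendsto_const)
    moreover have "iexp (\<eta> * x) * ((exp (\<i> * complex_of_real (h n) * complex_of_real x) - 1) / complex_of_real (h n)) = D n x" for n
      unfolding D_def by (simp add: field_simps exp_add[symmetric])
    ultimately show ?thesis by (simp add: mult.commute)
  qed
  have bnd: "cmod (D n x) \<le> \<bar>x\<bar>" for n x
  proof -
    have "D n x = iexp (\<eta> * x) * (iexp (h n * x) - 1) / complex_of_real (h n)"
      unfolding D_def by (simp add: field_simps exp_add[symmetric])
    then have "cmod (D n x) = cmod (iexp (h n * x) - 1) / \<bar>h n\<bar>"
      by (simp add: norm_mult norm_divide)
    also have "\<dots> \<le> \<bar>h n * x\<bar> / \<bar>h n\<bar>"
      by (intro divide_right_mono cmod_iexp_minus1) auto
    also have "\<dots> = \<bar>x\<bar>" using hne[of n] by (simp add: abs_mult)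
    finally show ?thesis .
  qed
  have intabs: "integrable NN (\<lambda>x. \<bar>x\<bar>)"
    using integrable_std_normal_distribution_moment[of 1] by (simp add: integrable_abs)
  have L1: "(\<lambda>n. CLINT x|NN. D n x) \<longlonglongrightarrow> (CLINT x|NN. (\<i> * complex_of_real x) * iexp (\<eta> * x))"
    by (rule integral_dominated_convergence[where w="\<lambda>x. \<bar>x\<bar>"])
       (use lim1 bnd intabs in \<open>auto simp: D_def\<close>)
  have E: "(CLINT x|NN. D n x) = (complex_of_real (exp (- ((\<eta> + h n)^2) / 2)) - complex_of_real (exp (- (\<eta>^2) / 2))) / complex_of_real (h n)" for n
    by (simp only: D_def integral_divide_zero Bochner_Integration.integral_diff[OF integrable_iexp_NN integrable_iexp_NN] char_gauss)
  have L3: "(\<lambda>n. (complex_of_real (exp (- ((\<eta> + h n)^2) / 2)) - complex_of_real (exp (- (\<eta>^2) / 2))) / complex_of_real (h n)) \<longlonglongrightarrow> complex_of_real (- \<eta> * exp (- (\<eta>^2) / 2))"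
  proof -
    have d: "DERIV (\<lambda>t. exp (- (t^2) / 2)) \<eta> :> exp (- (\<eta>^2) / 2) * (- (2 * \<eta>) / 2)"
      by (auto intro!: derivative_eq_intros)
    then have "((\<lambda>t. (exp (- ((\<eta> + t)^2) / 2) - exp (- (\<eta>^2) / 2)) / t) \<longlongrightarrow> - \<eta> * exp (- (\<eta>^2) / 2)) (at 0)"
      unfolding DERIV_def by (simp add: mult.commute)
    from filterlim_compose[OF this hr]
    have "(\<lambda>n. (exp (- ((\<eta> + h n)^2) / 2) - exp (- (\<eta>^2) / 2)) / h n) \<longlonglongrightarrow> - \<eta> * exp (- (\<eta>^2) / 2)" .
    from tendsto_of_real[OF this, where 'a=complex] show ?thesis by simp
  qed
  have L2: "(\<lambda>n. CLINT x|NN. D n x) \<longlonglongrightarrow> complex_of_real (- \<eta> * exp (- (\<eta>^2) / 2))"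
    unfolding E by (rule L3)
  show ?thesis by (rule LIMSEQ_unique[OF L1 L2])
qed




definition rk :: "real \<Rightarrow> real \<Rightarrow> complex" where
 "rk \<sigma> x = iexp (-\<sigma>*x) - complex_of_real (exp (-(\<sigma>^2)/2))
     - complex_of_real (exp (-3*\<sigma>^2/8)) * (iexp (-(\<sigma>/2)*x) - iexp ((\<sigma>/2)*x))"

definition ph :: "real \<Rightarrow> real \<Rightarrow> real" where
 "ph \<sigma> \<mu> = exp (-((\<mu>-\<sigma>)^2)/2) - exp (-(\<sigma>^2)/2) * exp (-(\<mu>^2)/2)
    - exp (-3*\<sigma>^2/8) * (exp (-((\<mu>-\<sigma>/2)^2)/2) - exp (-((\<mu>+\<sigma>/2)^2)/2))"

lemma hb_iexp: "has_bochner_integral NN (\<lambda>x. iexp (t * x)) (complex_of_real (exp (- (t^2) / 2)))"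
  using char_gauss[of t] integrable_iexp_NN[of t] has_bochner_integral_iff by blast

lemma intabs: "integrable NN (\<lambda>x. \<bar>x\<bar>)"
  using integrable_std_normal_distribution_moment[of 1] by (simp add: integrable_abs)

lemma integrable_x_iexp: "integrable NN (\<lambda>x. complex_of_real x * iexp (t * x))"
  by (rule Bochner_Integration.integrable_bound[OF intabs]) (auto simp: norm_mult)

lemma hb_x_iexp: "has_bochner_integral NN (\<lambda>x. complex_of_real x * iexp (t * x)) (\<i> * complex_of_real (t * exp (- (t^2) / 2)))"
proof -
  have "(CLINT x|NN. complex_of_real x * iexp (t * x)) = (CLINT x|NN. (-\<i>) * ((\<i> * complex_of_real x) * iexp (t * x)))"
    by (rule Bochner_Integration.integral_cong) (auto simp: mult.assoc)
  also have "\<dots> = (-\<i>) * (CLINT x|NN. (\<i> * complex_of_real x) * iexp (t * x))"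
    by (rule integral_mult_right_zero)
  also have "\<dots> = \<i> * complex_of_real (t * exp (- (t^2) / 2))"
    unfolding first_moment by simp
  finally show ?thesis using integrable_x_iexp has_bochner_integral_iff by blast
qed

lemma rk_expand: "iexp (\<mu>*x) * rk \<sigma> x = iexp ((\<mu>-\<sigma>)*x) - complex_of_real (exp (-(\<sigma>^2)/2)) * iexp (\<mu>*x)
     - complex_of_real (exp (-3*\<sigma>^2/8)) * (iexp ((\<mu>-\<sigma>/2)*x) - iexp ((\<mu>+\<sigma>/2)*x))"
proof -
  have f1: "iexp (\<mu>*x) * iexp (-\<sigma>*x) = iexp ((\<mu>-\<sigma>)*x)" by (subst iexp_mult) (simp add: algebra_simps)
  have f2: "iexp (\<mu>*x) * iexp (-(\<sigma>/2)*x) = iexp ((\<mu>-\<sigma>/2)*x)" by (subst iexp_mult) (simp add: algebra_simps)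
  have f3: "iexp (\<mu>*x) * iexp ((\<sigma>/2)*x) = iexp ((\<mu>+\<sigma>/2)*x)" by (subst iexp_mult) (simp add: algebra_simps)
  have "iexp (\<mu>*x) * rk \<sigma> x = iexp (\<mu>*x) * iexp (-\<sigma>*x) - complex_of_real (exp (-(\<sigma>^2)/2)) * iexp (\<mu>*x)
     - complex_of_real (exp (-3*\<sigma>^2/8)) * (iexp (\<mu>*x) * iexp (-(\<sigma>/2)*x) - iexp (\<mu>*x) * iexp ((\<sigma>/2)*x))"
    unfolding rk_def by (simp only: right_diff_distrib mult.assoc mult.commute mult.left_commute)
  then show ?thesis by (simp only: f1 f2 f3)
qed

lemma hb_rk: "has_bochner_integral NN (\<lambda>x. iexp (\<mu>*x) * rk \<sigma> x) (complex_of_real (ph \<sigma> \<mu>))"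
proof -
  have "has_bochner_integral NN (\<lambda>x. iexp ((\<mu>-\<sigma>)*x) - complex_of_real (exp (-(\<sigma>^2)/2)) * iexp (\<mu>*x)
     - complex_of_real (exp (-3*\<sigma>^2/8)) * (iexp ((\<mu>-\<sigma>/2)*x) - iexp ((\<mu>+\<sigma>/2)*x)))
     (complex_of_real (exp (- ((\<mu>-\<sigma>)^2) / 2)) - complex_of_real (exp (-(\<sigma>^2)/2)) * complex_of_real (exp (- (\<mu>^2) / 2))
       - complex_of_real (exp (-3*\<sigma>^2/8)) * (complex_of_real (exp (- ((\<mu>-\<sigma>/2)^2) / 2)) - complex_of_real (exp (- ((\<mu>+\<sigma>/2)^2) / 2))))"
    by (intro has_bochner_integral_diff has_bochner_integral_mult_right hb_iexp)
  then show ?thesis unfolding rk_expand ph_def by simp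
qed

lemma int_rk: "(CLINT x|NN. iexp (\<mu>*x) * rk \<sigma> x) = complex_of_real (ph \<sigma> \<mu>)"
  using hb_rk has_bochner_integral_iff by blast

lemma integrable_rk_iexp[simp]: "integrable NN (\<lambda>x. iexp (\<mu>*x) * rk \<sigma> x)"
  using hb_rk has_bochner_integral_iff by blast

lemma ph0: "ph \<sigma> 0 = 0"
  unfolding ph_def by (simp add: mult_exp_exp power2_eq_square)

lemma rk_int0: "(CLINT x|NN. rk \<sigma> x) = 0"
  using int_rk[of 0 \<sigma>] ph0 by simp

lemma integrable_rk[simp]: "integrable NN (rk \<sigma>)"
  using integrable_rk_iexp[of 0 \<sigma>] by simp

lemma hb_x_rk: "has_bochner_integral NN (\<lambda>x. complex_of_real x * rk \<sigma> x) 0"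
proof -
  define \<alpha> where "\<alpha> = exp (-(\<sigma>^2)/2)"
  define \<beta> where "\<beta> = exp (-3*\<sigma>^2/8)"
  define e where "e = exp (-((\<sigma>/2)^2)/2)"
  have key: "\<beta> * e = \<alpha>" unfolding \<alpha>_def \<beta>_def e_def by (simp add: mult_exp_exp power2_eq_square field_simps)
  have h1: "has_bochner_integral NN (\<lambda>x. complex_of_real x * iexp (-\<sigma>*x)) (\<i> * complex_of_real (-\<sigma> * \<alpha>))"
    using hb_x_iexp[of "-\<sigma>"] by (simp add: \<alpha>_def)
  have h2: "has_bochner_integral NN (\<lambda>x. complex_of_real x * iexp (-(\<sigma>/2)*x)) (\<i> * complex_of_real (-(\<sigma>/2) * e))"
    using hb_x_iexp[of "-(\<sigma>/2)"] by (simp add: e_def)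
  have h3: "has_bochner_integral NN (\<lambda>x. complex_of_real x * iexp ((\<sigma>/2)*x)) (\<i> * complex_of_real ((\<sigma>/2) * e))"
    using hb_x_iexp[of "\<sigma>/2"] by (simp add: e_def)
  have h0: "has_bochner_integral NN (\<lambda>x. complex_of_real x) 0"
    using hb_x_iexp[of 0] by simp
  have hb: "has_bochner_integral NN (\<lambda>x. complex_of_real x * iexp (-\<sigma>*x) - complex_of_real \<alpha> * complex_of_real x
      - complex_of_real \<beta> * (complex_of_real x * iexp (-(\<sigma>/2)*x) - complex_of_real x * iexp ((\<sigma>/2)*x)))
      (\<i> * complex_of_real (-\<sigma> * \<alpha>) - complex_of_real \<alpha> * 0
      - complex_of_real \<beta> * (\<i> * complex_of_real (-(\<sigma>/2) * e) - \<i> * complex_of_real ((\<sigma>/2) * e)))"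
    by (intro has_bochner_integral_diff has_bochner_integral_mult_right h1 h0 h2 h3)
  have fe: "(\<lambda>x. complex_of_real x * iexp (-\<sigma>*x) - complex_of_real \<alpha> * complex_of_real x
      - complex_of_real \<beta> * (complex_of_real x * iexp (-(\<sigma>/2)*x) - complex_of_real x * iexp ((\<sigma>/2)*x)))
      = (\<lambda>x. complex_of_real x * rk \<sigma> x)"
    unfolding rk_def \<alpha>_def \<beta>_def by (simp add: algebra_simps)
  have V: "(\<i> * complex_of_real (-\<sigma> * \<alpha>) - complex_of_real \<alpha> * 0
      - complex_of_real \<beta> * (\<i> * complex_of_real (-(\<sigma>/2) * e) - \<i> * complex_of_real ((\<sigma>/2) * e))) = 0"
    by (simp add: algebra_simps key[symmetric])
  show ?thesis using hb unfolding fe V .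
qed

lemma rk_moment0: "(CLINT x|NN. complex_of_real x * rk \<sigma> x) = 0"
  using hb_x_rk has_bochner_integral_iff by blast

lemma integrable_x_rk[simp]: "integrable NN (\<lambda>x. complex_of_real x * rk \<sigma> x)"
  using hb_x_rk has_bochner_integral_iff by blast

lemma norm_rk: "cmod (rk \<sigma> x) \<le> 4"
proof -
  let ?A = "iexp (-\<sigma>*x)" and ?B = "complex_of_real (exp (-(\<sigma>^2)/2))"
    and ?C = "complex_of_real (exp (-3*\<sigma>^2/8)) * (iexp (-(\<sigma>/2)*x) - iexp ((\<sigma>/2)*x))"
  have "cmod (rk \<sigma> x) \<le> cmod (?A - ?B) + cmod ?C" unfolding rk_def by (rule norm_triangle_ineq4)
  also have "\<dots> \<le> (cmod ?A + cmod ?B) + cmod ?C" by (intro add_right_mono norm_triangle_ineq4)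
  also have "cmod ?A = 1" by simp
  also have "cmod ?B \<le> 1" by simp
  also have "cmod ?C \<le> 1 * (1 + 1)"
    unfolding norm_mult by (intro mult_mono order.trans[OF norm_triangle_ineq4]) auto
  finally show ?thesis by simp
qed

lemma ph_factor: "ph \<sigma> \<mu> = exp (-(\<sigma>^2+\<mu>^2)/2) * (exp (\<sigma>*\<mu>) - 1 - exp (\<sigma>*\<mu>/2) + exp (-(\<sigma>*\<mu>/2)))"
proof -
  have e1: "exp (-((\<mu>-\<sigma>)^2)/2) = exp (-(\<sigma>^2+\<mu>^2)/2) * exp (\<sigma>*\<mu>)"
    by (simp add: mult_exp_exp power2_eq_square field_simps)
  have e2: "exp (-(\<sigma>^2)/2) * exp (-(\<mu>^2)/2) = exp (-(\<sigma>^2+\<mu>^2)/2)"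
    by (simp add: mult_exp_exp power2_eq_square field_simps)
  have e3: "exp (-3*\<sigma>^2/8) * exp (-((\<mu>-\<sigma>/2)^2)/2) = exp (-(\<sigma>^2+\<mu>^2)/2) * exp (\<sigma>*\<mu>/2)"
    by (simp add: mult_exp_exp power2_eq_square field_simps)
  have e4: "exp (-3*\<sigma>^2/8) * exp (-((\<mu>+\<sigma>/2)^2)/2) = exp (-(\<sigma>^2+\<mu>^2)/2) * exp (-(\<sigma>*\<mu>/2))"
    by (simp add: mult_exp_exp power2_eq_square field_simps)
  show ?thesis unfolding ph_def right_diff_distrib e1 e2 e3 e4 by (simp add: algebra_simps)
qed




lemma ph_p: "ph \<sigma> \<mu> = exp (-(\<sigma>^2+\<mu>^2)/2) * (exp (\<sigma>*\<mu>/2)^2 - 1 - exp (\<sigma>*\<mu>/2) + 1 / exp (\<sigma>*\<mu>/2))"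
proof -
  have "exp (\<sigma>*\<mu>) = exp (\<sigma>*\<mu>/2)^2" by (simp add: power2_eq_square mult_exp_exp)
  moreover have "exp (-(\<sigma>*\<mu>/2)) = 1 / exp (\<sigma>*\<mu>/2)" by (simp add: exp_minus field_simps)
  ultimately show ?thesis unfolding ph_factor by simp
qed

lemma ph_nonneg: "ph \<sigma> \<mu> \<ge> 0"
proof -
  define p where "p = exp (\<sigma>*\<mu>/2)"
  have p: "p > 0" unfolding p_def by simp
  have "p^2 - 1 - p + 1/p = (p - 1)^2 * (p + 1) / p" using p by (simp add: field_simps power2_eq_square)
  also have "\<dots> \<ge> 0" using p by simp
  finally show ?thesis unfolding ph_p p_def[symmetric] by simp
qed

definition TT :: "real \<Rightarrow> real \<Rightarrow> real" where "TT \<sigma> \<mu> = ph \<sigma> \<mu> + ph \<sigma> (-\<mu>)"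

lemma TT_formula: "TT \<sigma> \<mu> = exp (-(\<sigma>^2+\<mu>^2)/2) * (exp (\<sigma>*\<mu>) + exp (-(\<sigma>*\<mu>)) - 2)"
  unfolding TT_def ph_factor by (simp add: algebra_simps)

lemma TT_le1:
  assumes "\<sigma>*\<mu> \<ge> 0"
  shows "TT \<sigma> \<mu> \<le> 2 * exp (-((\<mu>-\<sigma>)^2)/2)"
proof -
  have h: "exp (-(\<sigma>*\<mu>)) \<le> exp (\<sigma>*\<mu>)" using assms by simp
  have "TT \<sigma> \<mu> \<le> exp (-(\<sigma>^2+\<mu>^2)/2) * (2 * exp (\<sigma>*\<mu>))"
    unfolding TT_formula by (rule mult_left_mono) (use h in linarith, simp)
  also have "\<dots> = 2 * exp (-((\<mu>-\<sigma>)^2)/2)"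
    by (simp add: mult_exp_exp power2_eq_square field_simps)
  finally show ?thesis .
qed

lemma cosh_bound:
  fixes Y :: real
  assumes "Y \<ge> 0"
  shows "exp Y + exp (-Y) - 2 \<le> Y^2 * exp Y"
proof -
  define q where "q = exp (Y/2)"
  have q: "q > 0" unfolding q_def by simp
  have e1: "exp Y = q^2" unfolding q_def by (simp add: power2_eq_square mult_exp_exp)
  have e2: "exp (-Y) = 1 / q^2" unfolding e1[symmetric] by (simp add: exp_minus field_simps)
  have "q - 1/q = q * (1 - exp (-Y))" unfolding e2 using q by (simp add: field_simps power2_eq_square)
  moreover have "0 \<le> 1 - exp (-Y)" "1 - exp (-Y) \<le> Y"
    using assms exp_ge_add_one_self[of "-Y"] by auto
  ultimately have "0 \<le> q - 1/q" "q - 1/q \<le> q * Y"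
    using q by (auto intro: mult_left_mono)
  then have "(q - 1/q)^2 \<le> (q*Y)^2" by (intro power_mono) auto
  moreover have "exp Y + exp (-Y) - 2 = (q - 1/q)^2"
    unfolding e1 e2 using q by (simp add: field_simps power2_eq_square)
  ultimately show ?thesis unfolding e1 by (simp add: power_mult_distrib mult.commute)
qed

lemma TT_le2:
  assumes "\<sigma>*\<mu> \<ge> 0"
  shows "TT \<sigma> \<mu> \<le> (\<sigma>*\<mu>)^2 * exp (-((\<mu>-\<sigma>)^2)/2)"
proof -
  have "TT \<sigma> \<mu> \<le> exp (-(\<sigma>^2+\<mu>^2)/2) * ((\<sigma>*\<mu>)^2 * exp (\<sigma>*\<mu>))"
    unfolding TT_formula by (intro mult_left_mono cosh_bound assms) auto
  also have "\<dots> = (\<sigma>*\<mu>)^2 * (exp (-(\<sigma>^2+\<mu>^2)/2) * exp (\<sigma>*\<mu>))" by simp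
  also have "exp (-(\<sigma>^2+\<mu>^2)/2) * exp (\<sigma>*\<mu>) = exp (-((\<mu>-\<sigma>)^2)/2)"
    by (simp add: mult_exp_exp power2_eq_square field_simps)
  finally show ?thesis .
qed

lemma TT_nonneg: "TT \<sigma> \<mu> \<ge> 0" unfolding TT_def using ph_nonneg by (simp add: add_nonneg_nonneg)

lemma main_diff: "ph \<sigma> \<sigma> - ph \<sigma> (-\<sigma>) \<ge> 1 - 3 * exp (-(\<sigma>^2)/2)"
proof -
  define x where "x = exp (-(\<sigma>^2)/2)"
  have x: "0 < x" "x \<le> 1" unfolding x_def by auto
  have A: "exp (\<sigma>*\<sigma>/2) = 1/x" unfolding x_def by (simp add: exp_minus power2_eq_square field_simps)
  have B: "exp (-(\<sigma>^2+\<sigma>^2)/2) = x^2" unfolding x_def by (simp add: power2_eq_square mult_exp_exp)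
  have A': "exp (\<sigma>*(-\<sigma>)/2) = x" unfolding x_def by (simp add: power2_eq_square)
  have B': "exp (-(\<sigma>^2+(-\<sigma>)^2)/2) = x^2" using B by simp
  have "ph \<sigma> \<sigma> - ph \<sigma> (-\<sigma>) = x^2 * ((1/x)^2 - 1 - 1/x + x) - x^2 * (x^2 - 1 - x + 1/x)"
    unfolding ph_p A A' B B' by simp
  also have "\<dots> = 1 - 2*x + 2*x^3 - x^4" using x by (simp add: field_simps power2_eq_square power3_eq_cube) (simp add: algebra_simps power4_eq_xxxx)
  also have "\<dots> \<ge> 1 - 3*x"
  proof -
    have "x^3 \<le> 1" using x by (simp add: power_le_one)
    moreover have "x^4 = x * x^3" by (simp add: eval_nat_numeral)
    ultimately have "x^4 \<le> x" using x by (simp add: mult_left_le)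
    moreover have "x^3 \<ge> 0" using x by simp
    ultimately show ?thesis by linarith
  qed
  finally show ?thesis unfolding x_def .
qed




definition JJ :: "real \<Rightarrow> complex \<Rightarrow> real \<Rightarrow> real \<Rightarrow> complex" where
  "JJ \<sigma> \<omega> \<theta> \<mu> = (\<omega> * iexp \<theta> * complex_of_real (ph \<sigma> \<mu>) + cnj \<omega> * iexp (-\<theta>) * complex_of_real (ph \<sigma> (-\<mu>))) / 2"

lemma JJ_le: assumes "cmod \<omega> \<le> 1" shows "cmod (JJ \<sigma> \<omega> \<theta> \<mu>) \<le> TT \<sigma> \<mu> / 2"
proof -
  have "cmod (JJ \<sigma> \<omega> \<theta> \<mu>) \<le> (cmod (\<omega> * iexp \<theta> * complex_of_real (ph \<sigma> \<mu>)) + cmod (cnj \<omega> * iexp (-\<theta>) * complex_of_real (ph \<sigma> (-\<mu>)))) / 2"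
    unfolding JJ_def by (simp add: norm_triangle_ineq divide_right_mono)
  also have "cmod (\<omega> * iexp \<theta> * complex_of_real (ph \<sigma> \<mu>)) \<le> ph \<sigma> \<mu>"
    using assms ph_nonneg[of \<sigma> \<mu>] by (simp add: norm_mult mult_left_le_one_le)
  also have "cmod (cnj \<omega> * iexp (-\<theta>) * complex_of_real (ph \<sigma> (-\<mu>))) \<le> ph \<sigma> (-\<mu>)"
    using assms ph_nonneg[of \<sigma> "-\<mu>"] by (simp add: norm_mult mult_left_le_one_le)
  finally show ?thesis unfolding TT_def by simp
qed

lemma JJ_ge: assumes "cmod \<omega> = 1" shows "cmod (JJ \<sigma> \<omega> \<theta> \<sigma>) \<ge> (ph \<sigma> \<sigma> - ph \<sigma> (-\<sigma>)) / 2"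
proof -
  have e1: "cmod (\<omega> * iexp \<theta> * complex_of_real (ph \<sigma> \<sigma>)) = ph \<sigma> \<sigma>"
    using assms ph_nonneg[of \<sigma> \<sigma>] by (simp add: norm_mult)
  have e2: "cmod (cnj \<omega> * iexp (-\<theta>) * complex_of_real (ph \<sigma> (-\<sigma>))) = ph \<sigma> (-\<sigma>)"
    using assms ph_nonneg[of \<sigma> "-\<sigma>"] by (simp add: norm_mult)
  have "ph \<sigma> \<sigma> - ph \<sigma> (-\<sigma>) \<le> cmod (\<omega> * iexp \<theta> * complex_of_real (ph \<sigma> \<sigma>) + cnj \<omega> * iexp (-\<theta>) * complex_of_real (ph \<sigma> (-\<sigma>)))"
    using norm_diff_ineq[of "\<omega> * iexp \<theta> * complex_of_real (ph \<sigma> \<sigma>)" "cnj \<omega> * iexp (-\<theta>) * complex_of_real (ph \<sigma> (-\<sigma>))"]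
    unfolding e1 e2 by simp
  then show ?thesis unfolding JJ_def by (simp add: divide_right_mono)
qed

lemma geom_head: fixes r :: real assumes "0 \<le> r" "r < 1" shows "(\<Sum>j<k. r^(k-j)) \<le> r / (1 - r)"
proof (induction k)
  case 0 have "0 \<le> r / (1 - r)" using assms by (simp add: zero_le_divide_iff)
  then show ?case by simp
next
  case (Suc k)
  have "(\<Sum>j<Suc k. r^(Suc k - j)) = r * ((\<Sum>j<k. r^(k-j)) + 1)"
  proof -
    have "(\<Sum>j<Suc k. r^(Suc k - j)) = (\<Sum>j<Suc k. r * r^(k-j))"
      by (intro sum.cong) (auto simp: Suc_diff_le)
    also have "\<dots> = r * (\<Sum>j<Suc k. r^(k-j))" by (rule sum_distrib_left[symmetric])
    also have "(\<Sum>j<Suc k. r^(k-j)) = (\<Sum>j<k. r^(k-j)) + 1" by simp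
    finally show ?thesis .
  qed
  also have "\<dots> \<le> r * (r/(1-r) + 1)" using Suc assms by (intro mult_left_mono) auto
  also have "\<dots> = r / (1 - r)" using assms by (simp add: field_simps)
  finally show ?case .
qed

lemma bernoulli_b: assumes "b \<ge> 1" shows "b^m - 1 \<ge> real m * (b - 1)"
  using Bernoulli_inequality[of "b-1" m] assms by simp

lemma tail_term:
  fixes b \<sigma> :: real
  assumes "b > 1" "\<sigma> > 0" "m \<ge> 1"
  shows "TT \<sigma> (\<sigma>*b^m) / 2 \<le> exp (-(\<sigma>^2*(b-1)^2)/8) ^ m"
proof -
  have bm: "b^m \<ge> 1" using assms by simp
  have "TT \<sigma> (\<sigma>*b^m) \<le> 2 * exp (-((\<sigma>*b^m - \<sigma>)^2)/2)"
    using assms bm by (intro TT_le1) simp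
  also have "exp (-((\<sigma>*b^m - \<sigma>)^2)/2) \<le> exp (real m * (-(\<sigma>^2*(b-1)^2)/8))"
  proof -
    have B: "b^m - 1 \<ge> real m * (b-1)" using bernoulli_b assms by simp
    have m0: "real m * (b-1) \<ge> 0" using assms by simp
    have "(real m * (b-1))^2 \<le> (b^m - 1)^2" using B m0 by (intro power_mono) auto
    moreover have "real m * (b-1)^2 \<le> (real m * (b-1))^2"
    proof -
      have "real m \<le> real m ^ 2" using assms by (simp add: power2_eq_square)
      then show ?thesis by (simp add: power_mult_distrib mult_right_mono)
    qed
    ultimately have "real m * (b-1)^2 \<le> (b^m - 1)^2" by linarith
    then have F: "\<sigma>^2 * (real m * (b-1)^2) \<le> \<sigma>^2 * (b^m - 1)^2" by (intro mult_left_mono) auto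
    have E1: "-((\<sigma>*b^m - \<sigma>)^2)/2 = -(\<sigma>^2 * (b^m - 1)^2)/2" by (simp add: power2_eq_square algebra_simps)
    have E2: "real m * (-(\<sigma>^2*(b-1)^2)/8) = -(\<sigma>^2 * (real m * (b-1)^2))/8" by (simp add: algebra_simps)
    have Y: "\<sigma>^2 * (b^m - 1)^2 \<ge> 0" by simp
    show ?thesis unfolding exp_le_cancel_iff E1 E2 using F Y by linarith
  qed
  also have "\<dots> = exp (-(\<sigma>^2*(b-1)^2)/8) ^ m" by (rule exp_of_nat_mult)
  finally show ?thesis by simp
qed

lemma head_term:
  fixes a b \<sigma> :: real
  assumes "1 < a" "a \<le> b" "\<sigma> > 0" "n \<ge> 1"
  shows "a^n * TT \<sigma> (\<sigma>*(1/b)^n) / 2 \<le> 2 * exp (-(\<sigma>^2*(b-1)^2)/8) ^ n + \<sigma>^4 * exp (-(\<sigma>^2)/8) / 2 * (1/b)^n"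
proof -
  define l where "l = (1/b)^n"
  have b1: "b > 1" using assms by simp
  have l0: "l > 0" unfolding l_def using b1 by simp
  have bl: "b^n * l = 1" unfolding l_def using b1 by (simp add: power_one_over)
  have an: "a^n \<le> b^n" using assms by (intro power_mono) auto
  have bn1: "b^n \<ge> 1" using b1 by simp
  have bl': "b^n = 1/l" using bl l0 by (simp add: field_simps)
  have l1: "l \<le> 1" unfolding l_def using b1 by (simp add: power_le_one)
  have TTn: "TT \<sigma> (\<sigma>*l) \<ge> 0" by (rule TT_nonneg)
  show ?thesis
  proof (cases "l > 1/2")
    case True
    have bn2: "b^n < 2" unfolding bl' using True l0 by (simp add: divide_less_eq)
    have "TT \<sigma> (\<sigma>*l) \<le> 2 * exp (-((\<sigma>*l - \<sigma>)^2)/2)"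
      using assms l0 by (intro TT_le1) simp
    also have "exp (-((\<sigma>*l - \<sigma>)^2)/2) \<le> exp (real n * (-(\<sigma>^2*(b-1)^2)/8))"
    proof -
      have "1 - l = l * (b^n - 1)" using bl by (simp add: algebra_simps)
      also have "\<dots> \<ge> (1/2) * (b^n - 1)" using True bn1 by (intro mult_right_mono) auto
      finally have "1 - l \<ge> (1/2) * (b^n - 1)" .
      moreover have "b^n - 1 \<ge> real n * (b-1)" using bernoulli_b b1 by simp
      ultimately have h: "1 - l \<ge> real n * (b-1) / 2" by simp
      have h0: "real n * (b-1) / 2 \<ge> 0" using b1 by simp
      have "(real n * (b-1) / 2)^2 \<le> (1 - l)^2" using h h0 by (intro power_mono) auto
      moreover have "real n * (b-1)^2 / 4 \<le> (real n * (b-1) / 2)^2"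
      proof -
        have "real n \<le> real n ^ 2" using assms by (simp add: power2_eq_square)
        then show ?thesis by (simp add: power_mult_distrib power_divide mult_right_mono divide_right_mono)
      qed
      ultimately have "real n * (b-1)^2 / 4 \<le> (1 - l)^2" by linarith
      then have "\<sigma>^2 * (real n * (b-1)^2 / 4) \<le> \<sigma>^2 * (1 - l)^2" by (intro mult_left_mono) auto
      moreover have "(\<sigma>*l - \<sigma>)^2 = \<sigma>^2 * (1 - l)^2" by (simp add: power2_eq_square algebra_simps)
      ultimately show ?thesis by (simp add: mult.left_commute)
    qed
    also have "exp (real n * (-(\<sigma>^2*(b-1)^2)/8)) = exp (-(\<sigma>^2*(b-1)^2)/8) ^ n" by (rule exp_of_nat_mult)
    finally have T: "TT \<sigma> (\<sigma>*l) \<le> 2 * exp (-(\<sigma>^2*(b-1)^2)/8) ^ n" by simp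
    have "a^n * TT \<sigma> (\<sigma>*l) / 2 \<le> 2 * TT \<sigma> (\<sigma>*l) / 2"
      using an bn2 TTn by (intro divide_right_mono mult_right_mono) auto
    also have "\<dots> \<le> 2 * exp (-(\<sigma>^2*(b-1)^2)/8) ^ n" using T by simp
    also have "\<dots> \<le> 2 * exp (-(\<sigma>^2*(b-1)^2)/8) ^ n + \<sigma>^4 * exp (-(\<sigma>^2)/8) / 2 * (1/b)^n"
      using b1 by simp
    finally show ?thesis unfolding l_def .
  next
    case False
    have "TT \<sigma> (\<sigma>*l) \<le> (\<sigma>*(\<sigma>*l))^2 * exp (-((\<sigma>*l - \<sigma>)^2)/2)"
      using assms l0 by (intro TT_le2) simp
    also have "exp (-((\<sigma>*l - \<sigma>)^2)/2) \<le> exp (-(\<sigma>^2)/8)"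
    proof -
      have "1/2 \<le> 1 - l" using False by simp
      then have "(1/2)^2 \<le> (1 - l)^2" by (intro power_mono) auto
      then have "\<sigma>^2 * (1/4) \<le> \<sigma>^2 * (1 - l)^2" by (intro mult_left_mono) (auto simp: power2_eq_square)
      moreover have "(\<sigma>*l - \<sigma>)^2 = \<sigma>^2 * (1 - l)^2" by (simp add: power2_eq_square algebra_simps)
      ultimately show ?thesis by simp
    qed
    finally have T: "TT \<sigma> (\<sigma>*l) \<le> (\<sigma>*(\<sigma>*l))^2 * exp (-(\<sigma>^2)/8)" by (simp add: mult_left_mono)
    have "a^n * TT \<sigma> (\<sigma>*l) / 2 \<le> b^n * ((\<sigma>*(\<sigma>*l))^2 * exp (-(\<sigma>^2)/8)) / 2"
      using an T TTn bn1 by (intro divide_right_mono mult_mono) auto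
    also have "\<dots> = \<sigma>^4 * exp (-(\<sigma>^2)/8) / 2 * l * (b^n * l)"
      by (simp add: power2_eq_square eval_nat_numeral algebra_simps)
    also have "\<dots> = \<sigma>^4 * exp (-(\<sigma>^2)/8) / 2 * l" using bl by simp
    also have "\<dots> \<le> 2 * exp (-(\<sigma>^2*(b-1)^2)/8) ^ n + \<sigma>^4 * exp (-(\<sigma>^2)/8) / 2 * l" by simp
    finally show ?thesis unfolding l_def .
  qed
qed




lemma q_frac: fixes q :: real assumes "0 \<le> q" "q \<le> 1/65" shows "q / (1 - q) \<le> 1/64"
  using assms by (simp add: field_simps)

lemma lower_bound:
  fixes a b \<sigma> t0 :: real and \<omega> :: complex and k :: nat
  assumes ab: "1 < a" "a \<le> b" and \<sigma>: "\<sigma> > 0" and \<omega>: "cmod \<omega> = 1"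
    and h\<alpha>: "exp (-(\<sigma>^2)/2) \<le> 1/16" and hq: "exp (-(\<sigma>^2*(b-1)^2)/8) \<le> 1/65"
    and hC: "\<sigma>^4 * exp (-(\<sigma>^2)/8) \<le> (b-1)/16"
  shows "cmod (\<Sum>j. complex_of_real (a^k / a^j) * JJ \<sigma> \<omega> (b^j*t0) (\<sigma>*b^j/b^k)) \<ge> 1/4"
proof -
  define q where "q = exp (-(\<sigma>^2*(b-1)^2)/8)"
  define C where "C = \<sigma>^4 * exp (-(\<sigma>^2)/8)"
  define u where "u j = complex_of_real (a^k / a^j) * JJ \<sigma> \<omega> (b^j*t0) (\<sigma>*b^j/b^k)" for j
  define v where "v j = a^k / a^j * TT \<sigma> (\<sigma>*b^j/b^k) / 2" for j
  have b1: "b > 1" using ab by simp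
  have a0: "a > 0" using ab by simp
  have q0: "0 \<le> q" "q \<le> 1/65" using hq unfolding q_def by auto
  have mu0: "\<sigma> * (\<sigma>*b^j/b^k) \<ge> 0" for j using \<sigma> b1 by simp
  have uv: "norm (u j) \<le> v j" for j
  proof -
    have "norm (u j) = a^k / a^j * cmod (JJ \<sigma> \<omega> (b^j*t0) (\<sigma>*b^j/b^k))"
      unfolding u_def norm_mult norm_of_real using a0 by simp
    also have "\<dots> \<le> a^k / a^j * (TT \<sigma> (\<sigma>*b^j/b^k) / 2)"
      using JJ_le[of \<omega>] \<omega> a0 by (intro mult_left_mono) auto
    finally show ?thesis unfolding v_def by simp
  qed
  have v0: "v j \<ge> 0" for j unfolding v_def using a0 TT_nonneg by simp
  have vle: "v j \<le> a^k * (1/a)^j" for j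
  proof -
    have "TT \<sigma> (\<sigma>*b^j/b^k) \<le> 2 * exp (-((\<sigma>*b^j/b^k - \<sigma>)^2)/2)" by (rule TT_le1[OF mu0])
    also have "\<dots> \<le> 2" by simp
    finally have "TT \<sigma> (\<sigma>*b^j/b^k) / 2 \<le> 1" by simp
    then have "a^k / a^j * (TT \<sigma> (\<sigma>*b^j/b^k) / 2) \<le> a^k / a^j * 1"
      using a0 by (intro mult_left_mono) auto
    moreover have "a^k / a^j = a^k * (1/a)^j" by (simp add: power_one_over)
    moreover have "v j = a^k / a^j * (TT \<sigma> (\<sigma>*b^j/b^k) / 2)" unfolding v_def by simp
    ultimately show ?thesis by simp
  qed
  have sumgeo: "summable (\<lambda>j. a^k * (1/a)^j)"
    using ab by (intro summable_mult summable_geometric) simp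
  have sv: "summable v"
    by (rule summable_comparison_test[OF _ sumgeo]) (use v0 vle in auto)
  have su: "summable u"
    by (rule summable_comparison_test[OF _ sv]) (use uv in auto)
  define w where "w j = (if j = k then 0 else u j)" for j
  define vv where "vv j = (if j = k then 0 else v j)" for j
  have svv: "summable vv"
    by (rule summable_comparison_test[OF _ sv]) (auto simp: vv_def v0)
  have sw: "summable w"
    by (rule summable_comparison_test[OF _ svv]) (auto simp: w_def vv_def uv)
  have split: "(\<Sum>j. u j) = (\<Sum>j. w j) + u k"
  proof -
    have "(\<lambda>j. w j + (if j = k then u j else 0)) sums ((\<Sum>j. w j) + u k)"
      by (intro sums_add summable_sums sw sums_single)
    moreover have "(\<lambda>j. w j + (if j = k then u j else 0)) = u" by (auto simp: w_def)
    ultimately show ?thesis by (simp add: sums_iff)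
  qed
  have nw: "norm (\<Sum>j. w j) \<le> (\<Sum>j. vv j)"
    by (rule norm_suminf_le[OF _ svv]) (auto simp: w_def vv_def uv)
  have vvsplit: "(\<Sum>j. vv j) = (\<Sum>i. vv (i + Suc k)) + (\<Sum>i<Suc k. vv i)"
    by (rule suminf_split_initial_segment[OF svv])
  have headeq: "(\<Sum>i<Suc k. vv i) = (\<Sum>i<k. v i)"
    by (simp add: vv_def)
  have tail: "(\<Sum>i. vv (i + Suc k)) \<le> q / (1 - q)"
  proof -
    have t1: "vv (i + Suc k) \<le> q * q^i" for i
    proof -
      have e1: "\<sigma>*b^(i + Suc k)/b^k = \<sigma>*b^(Suc i)" using b1 by (simp add: power_add)
      have e2: "a^k / a^(i + Suc k) = 1 / a^(Suc i)" using a0 by (simp add: power_add)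
      have "vv (i + Suc k) = 1 / a^(Suc i) * TT \<sigma> (\<sigma>*b^(Suc i)) / 2"
        unfolding vv_def v_def e1 e2 by simp
      also have "\<dots> \<le> 1 * TT \<sigma> (\<sigma>*b^(Suc i)) / 2"
        using ab TT_nonneg one_le_power[of a "Suc i"] by (intro divide_right_mono mult_right_mono) auto
      also have "\<dots> \<le> q ^ (Suc i)" unfolding q_def using tail_term[OF b1 \<sigma>, of "Suc i"] by simp
      finally show ?thesis by simp
    qed
    have g: "(\<lambda>i. q * q^i) sums (q * (1 / (1 - q)))"
      using q0 by (intro sums_mult geometric_sums) auto
    have "(\<Sum>i. vv (i + Suc k)) \<le> (\<Sum>i. q * q^i)"
      by (rule suminf_le[OF t1 summable_ignore_initial_segment[OF svv]]) (use g sums_summable in blast)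
    also have "\<dots> = q / (1 - q)" using g by (simp add: sums_iff)
    finally show ?thesis .
  qed
  have head: "(\<Sum>i<k. v i) \<le> 2 * (q / (1 - q)) + C / 2 * ((1/b) / (1 - 1/b))"
  proof -
    have "(\<Sum>i<k. v i) \<le> (\<Sum>i<k. 2 * q^(k-i) + C / 2 * (1/b)^(k-i))"
    proof (rule sum_mono)
      fix i assume "i \<in> {..<k}"
      then have ik: "i < k" by simp
      have e1: "a^k / a^i = a^(k-i)" using a0 ik by (simp add: power_diff)
      have e2: "\<sigma>*b^i/b^k = \<sigma>*(1/b)^(k-i)"
        using b1 ik by (simp add: power_diff power_one_over)
      have "v i = a^(k-i) * TT \<sigma> (\<sigma>*(1/b)^(k-i)) / 2" unfolding v_def e1 e2 by simp
      also have "\<dots> \<le> 2 * q^(k-i) + C / 2 * (1/b)^(k-i)"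
        unfolding q_def C_def by (rule head_term[OF ab \<sigma>]) (use ik in simp)
      finally show "v i \<le> 2 * q^(k-i) + C / 2 * (1/b)^(k-i)" .
    qed
    also have "\<dots> = 2 * (\<Sum>i<k. q^(k-i)) + C / 2 * (\<Sum>i<k. (1/b)^(k-i))"
      by (simp add: sum.distrib sum_distrib_left)
    also have "\<dots> \<le> 2 * (q / (1 - q)) + C / 2 * ((1/b) / (1 - 1/b))"
    proof -
      have "(\<Sum>i<k. q^(k-i)) \<le> q / (1 - q)" using q0 by (intro geom_head) auto
      moreover have "(\<Sum>i<k. (1/b)^(k-i)) \<le> (1/b) / (1 - 1/b)" using b1 by (intro geom_head) auto
      moreover have "C \<ge> 0" unfolding C_def by simp
      ultimately show ?thesis by (intro add_mono mult_left_mono) auto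
    qed
    finally show ?thesis .
  qed
  have qf: "q / (1 - q) \<le> 1/64" using q_frac q0 by blast
  have Cf: "C / 2 * ((1/b) / (1 - 1/b)) \<le> 1/32"
  proof -
    have "(1/b) / (1 - 1/b) = 1 / (b - 1)" using b1 by (simp add: field_simps)
    moreover have "C / 2 * (1 / (b - 1)) \<le> 1/32" using hC b1 unfolding C_def by (simp add: field_simps)
    ultimately show ?thesis by simp
  qed
  have main: "norm (u k) \<ge> 13/32"
  proof -
    have "u k = JJ \<sigma> \<omega> (b^k*t0) \<sigma>" unfolding u_def using a0 b1 by simp
    then have "norm (u k) \<ge> (ph \<sigma> \<sigma> - ph \<sigma> (-\<sigma>)) / 2" using JJ_ge[OF \<omega>] by simp
    moreover have "ph \<sigma> \<sigma> - ph \<sigma> (-\<sigma>) \<ge> 1 - 3 * (1/16)" using main_diff[of \<sigma>] h\<alpha> by linarith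
    ultimately show ?thesis by simp
  qed
  have "norm (\<Sum>j. w j) \<le> 5/64" using nw vvsplit headeq tail head qf Cf by linarith
  then have "norm (u k) - norm (\<Sum>j. w j) \<ge> 1/4" using main by linarith
  moreover have "norm (u k) - norm (\<Sum>j. w j) \<le> norm ((\<Sum>j. w j) + u k)"
    using norm_diff_ineq[of "u k" "\<Sum>j. w j"] by (simp add: add.commute)
  ultimately show ?thesis using split unfolding u_def by simp
qed




lemma fm_NN: "finite_measure NN" using prob_NN unfolding prob_space_def by blast

lemma bnd_int:
  fixes f :: "real \<Rightarrow> 'b::{banach, second_countable_topology}"
  assumes "f \<in> borel_measurable borel" "\<And>x. norm (f x) \<le> B"
  shows "integrable NN f"
  by (rule finite_measure.integrable_const_bound[OF fm_NN, where B=B]) (use assms in auto)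

lemma cnj_iexp: "cnj (iexp t) = iexp (-t)"
  by (simp add: exp_cnj)

lemma int_Re:
  "(CLINT x|NN. complex_of_real (Re (\<omega> * iexp (\<theta> + \<mu>*x))) * rk \<sigma> x) = JJ \<sigma> \<omega> \<theta> \<mu>"
proof -
  have pw: "complex_of_real (Re (\<omega> * iexp (\<theta> + \<mu>*x))) * rk \<sigma> x
      = (\<omega> * iexp \<theta> / 2) * (iexp (\<mu>*x) * rk \<sigma> x) + (cnj \<omega> * iexp (-\<theta>) / 2) * (iexp ((-\<mu>)*x) * rk \<sigma> x)" for x
  proof -
    have z: "\<omega> * iexp (\<theta> + \<mu>*x) = \<omega> * iexp \<theta> * iexp (\<mu>*x)" by (subst mult.assoc, subst iexp_mult) (rule refl)
    have cz: "cnj (\<omega> * iexp (\<theta> + \<mu>*x)) = cnj \<omega> * iexp (-\<theta>) * iexp ((-\<mu>)*x)"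
      unfolding z complex_cnj_mult cnj_iexp by simp
    have "complex_of_real (Re (\<omega> * iexp (\<theta> + \<mu>*x))) = (\<omega> * iexp (\<theta> + \<mu>*x) + cnj (\<omega> * iexp (\<theta> + \<mu>*x))) / 2"
      by (simp only: complex_add_cnj) simp
    also have "\<dots> = (\<omega> * iexp \<theta> * iexp (\<mu>*x) + cnj \<omega> * iexp (-\<theta>) * iexp ((-\<mu>)*x)) / 2"
      unfolding cz by (simp only: z)
    finally show ?thesis by (simp add: algebra_simps add_divide_distrib)
  qed
  have "has_bochner_integral NN (\<lambda>x. (\<omega> * iexp \<theta> / 2) * (iexp (\<mu>*x) * rk \<sigma> x) + (cnj \<omega> * iexp (-\<theta>) / 2) * (iexp ((-\<mu>)*x) * rk \<sigma> x))
     ((\<omega> * iexp \<theta> / 2) * complex_of_real (ph \<sigma> \<mu>) + (cnj \<omega> * iexp (-\<theta>) / 2) * complex_of_real (ph \<sigma> (-\<mu>)))"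
    by (intro has_bochner_integral_add has_bochner_integral_mult_right hb_rk)
  then have "has_bochner_integral NN (\<lambda>x. complex_of_real (Re (\<omega> * iexp (\<theta> + \<mu>*x))) * rk \<sigma> x) (JJ \<sigma> \<omega> \<theta> \<mu>)"
    unfolding pw[symmetric] JJ_def by (simp add: add_divide_distrib)
  then show ?thesis using has_bochner_integral_iff by blast
qed




definition FF :: "real \<Rightarrow> real \<Rightarrow> complex \<Rightarrow> real \<Rightarrow> real" where
  "FF c b \<omega> t = (\<Sum>j. c^j * Re (\<omega> * iexp (b^j * t)))"

lemma FF_term_bound:
  assumes "cmod \<omega> \<le> 1" "0 \<le> c"
  shows "\<bar>c^j * Re (\<omega> * iexp y)\<bar> \<le> c^j"
proof -
  have "\<bar>Re (\<omega> * iexp y)\<bar> \<le> cmod (\<omega> * iexp y)" by (rule abs_Re_le_cmod)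
  also have "\<dots> \<le> 1" using assms by (simp add: norm_mult)
  finally show ?thesis using assms by (simp add: abs_mult mult_left_le)
qed

lemma FF_tb:
  assumes "cmod \<omega> \<le> 1" "0 \<le> c"
  shows "norm (c^j * Re (\<omega> * iexp (b^j * t))) \<le> c^j"
    and "norm \<bar>c^j * Re (\<omega> * iexp (b^j * t))\<bar> \<le> c^j"
    and "\<bar>c^j * Re (\<omega> * iexp (b^j * t))\<bar> \<le> c^j"
  using FF_term_bound[OF assms, of j "b^j * t"] by auto

lemma FF_summable:
  assumes "cmod \<omega> \<le> 1" "0 \<le> c" "c < 1"
  shows "summable (\<lambda>j. c^j * Re (\<omega> * iexp (b^j * t)))"
    and "summable (\<lambda>j. \<bar>c^j * Re (\<omega> * iexp (b^j * t))\<bar>)"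
proof -
  have g: "summable (\<lambda>j. c^j)" using assms by (intro summable_geometric) simp
  show "summable (\<lambda>j. \<bar>c^j * Re (\<omega> * iexp (b^j * t))\<bar>)"
    by (rule summable_comparison_test'[OF g]) (rule FF_tb(2)[OF assms(1,2)])
  then show "summable (\<lambda>j. c^j * Re (\<omega> * iexp (b^j * t)))"
    by (rule summable_rabs_cancel)
qed

lemma FF_bound:
  assumes "cmod \<omega> \<le> 1" "0 \<le> c" "c < 1"
  shows "\<bar>FF c b \<omega> t\<bar> \<le> 1 / (1 - c)"
proof -
  have g: "(\<lambda>j. c^j) sums (1 / (1 - c))" using assms by (intro geometric_sums) simp
  have "\<bar>FF c b \<omega> t\<bar> \<le> (\<Sum>j. \<bar>c^j * Re (\<omega> * iexp (b^j * t))\<bar>)"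
    unfolding FF_def by (rule summable_rabs[OF FF_summable(2)[OF assms]])
  also have "\<dots> \<le> (\<Sum>j. c^j)"
    by (rule suminf_le[OF FF_tb(3)[OF assms(1,2)] FF_summable(2)[OF assms]]) (use g sums_summable in blast)
  also have "\<dots> = 1 / (1 - c)" using g by (simp add: sums_iff)
  finally show ?thesis .
qed

lemma FF_cont:
  assumes "cmod \<omega> \<le> 1" "0 \<le> c" "c < 1"
  shows "continuous_on UNIV (FF c b \<omega>)"
proof -
  have g: "summable (\<lambda>j. c^j)" using assms by (intro summable_geometric) simp
  have ul: "uniform_limit UNIV (\<lambda>n t. \<Sum>i<n. c^i * Re (\<omega> * iexp (b^i * t))) (\<lambda>t. \<Sum>i. c^i * Re (\<omega> * iexp (b^i * t))) sequentially"
    by (rule Weierstrass_m_test[where M="\<lambda>i. c^i", OF FF_tb(1)[OF assms(1,2)] g])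
  have "continuous_on UNIV (\<lambda>t. \<Sum>i. c^i * Re (\<omega> * iexp (b^i * t)))"
    by (rule uniform_limit_theorem[OF _ ul]) (auto intro!: continuous_intros always_eventually)
  then show ?thesis unfolding FF_def[abs_def] .
qed

lemma exp_cube_bound:
  fixes y :: real assumes "y \<ge> 0" shows "y^3 / 27 \<le> exp y"
proof -
  have "exp y = exp (y/3) ^ 3" using exp_of_nat_mult[of 3 "y/3"] by simp
  moreover have "y/3 \<le> exp (y/3)" using exp_ge_add_one_self[of "y/3"] by linarith
  then have "(y/3)^3 \<le> exp (y/3) ^ 3" using assms by (intro power_mono) auto
  ultimately show ?thesis by (simp add: power_divide)
qed

lemma exp_neg_le: fixes y :: real assumes "y \<ge> 0" shows "exp (-y) \<le> 1 / (1 + y)"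
proof -
  have "1 + y \<le> exp y" by (rule exp_ge_add_one_self)
  then show ?thesis using assms by (simp add: exp_minus field_simps)
qed

lemma sigma_exists:
  fixes b :: real assumes b: "b > 1"
  shows "\<exists>\<sigma>>0. exp (-(\<sigma>^2)/2) \<le> 1/16 \<and> exp (-(\<sigma>^2*(b-1)^2)/8) \<le> 1/65 \<and> \<sigma>^4 * exp (-(\<sigma>^2)/8) \<le> (b-1)/16"
proof -
  define M where "M = 30 + 512/(b-1)^2 + 221184/(b-1)"
  have b0: "b - 1 > 0" using b by simp
  have M1: "M \<ge> 30" "M \<ge> 512/(b-1)^2" "M \<ge> 221184/(b-1)" unfolding M_def using b0 by auto
  define \<sigma> where "\<sigma> = sqrt M"
  have M0: "M > 0" using M1 by simp
  have s2: "\<sigma>^2 = M" unfolding \<sigma>_def using M0 by simp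
  have s4: "\<sigma>^4 = M^2" using s2 by (metis power2_eq_square power_mult numeral_times_numeral semiring_norm(12) power_even_eq mult_2_right numeral_Bit0)
  have "exp (-(\<sigma>^2)/2) \<le> 1 / (1 + M/2)" unfolding s2 using exp_neg_le[of "M/2"] M0 by simp
  also have "\<dots> \<le> 1/16" using M1 by (simp add: field_simps)
  finally have A: "exp (-(\<sigma>^2)/2) \<le> 1/16" .
  have y: "M*(b-1)^2/8 \<ge> 64" using M1(2) b0 by (simp add: field_simps)
  have "exp (-(\<sigma>^2*(b-1)^2)/8) \<le> 1 / (1 + M*(b-1)^2/8)" unfolding s2 using exp_neg_le[of "M*(b-1)^2/8"] y by simp
  also have "\<dots> \<le> 1/65" using y by (simp add: field_simps)
  finally have B: "exp (-(\<sigma>^2*(b-1)^2)/8) \<le> 1/65" .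
  have z: "(M/8)^3/27 \<le> exp (M/8)" using exp_cube_bound[of "M/8"] M0 by simp
  have "\<sigma>^4 * exp (-(\<sigma>^2)/8) = M^2 / exp (M/8)" unfolding s4 s2 by (simp add: exp_minus field_simps)
  also have "\<dots> \<le> M^2 / ((M/8)^3/27)" using z M0 by (intro divide_left_mono mult_pos_pos) auto
  also have "\<dots> = 13824 / M" using M0 by (simp add: field_simps power2_eq_square power3_eq_cube)
  also have "\<dots> \<le> (b-1)/16" using M1(3) b0 M0 by (simp add: field_simps)
  finally have C: "\<sigma>^4 * exp (-(\<sigma>^2)/8) \<le> (b-1)/16" .
  have "\<sigma> > 0" unfolding \<sigma>_def using M0 by simp
  then show ?thesis using A B C by blast
qed




lemma mNN: "borel_measurable NN = borel_measurable borel"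
  by (rule measurable_cong_sets) auto

lemma rk_cont: "continuous_on UNIV (rk \<sigma>)"
  unfolding rk_def[abs_def] by (intro continuous_intros)

lemma rk_meas[measurable]: "rk \<sigma> \<in> borel_measurable borel"
  by (rule borel_measurable_continuous_onI[OF rk_cont])

lemma FF_nondiff:
  fixes a b t0 :: real and \<omega> :: complex
  assumes ab: "1 < a" "a \<le> b" and \<omega>: "cmod \<omega> = 1"
  shows "\<not> FF (1/a) b \<omega> differentiable (at t0)"
proof
  assume dif: "FF (1/a) b \<omega> differentiable (at t0)"
  define c where "c = 1/a"
  define F where "F = FF c b \<omega>"
  have b1: "b > 1" and a0: "a > 0" using ab by auto
  have c: "0 \<le> c" "c < 1" unfolding c_def using ab by auto
  have \<omega>1: "cmod \<omega> \<le> 1" using \<omega> by simp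
  define Bd where "Bd = 1/(1-c)"
  have Bd0: "Bd \<ge> 0" unfolding Bd_def using c by simp
  have Fb: "\<bar>F t\<bar> \<le> Bd" for t unfolding F_def Bd_def by (rule FF_bound[OF \<omega>1 c])
  have Fc: "continuous_on UNIV F" unfolding F_def by (rule FF_cont[OF \<omega>1 c])
  have Fm[measurable]: "F \<in> borel_measurable borel" by (rule borel_measurable_continuous_onI[OF Fc])
  obtain D where D: "DERIV F t0 :> D"
    using dif DERIV_deriv_iff_real_differentiable unfolding F_def c_def by blast
  obtain \<sigma> where \<sigma>: "\<sigma> > 0" and h\<alpha>: "exp (-(\<sigma>^2)/2) \<le> 1/16" and hq: "exp (-(\<sigma>^2*(b-1)^2)/8) \<le> 1/65"
    and hC: "\<sigma>^4 * exp (-(\<sigma>^2)/8) \<le> (b-1)/16"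
    using sigma_exists[OF b1] by blast
  define R where "R h = F (t0 + h) - F t0 - D * h" for h
  have R0: "R 0 = 0" unfolding R_def by simp
  have Q: "((\<lambda>h. R h / h) \<longlongrightarrow> 0) (at 0)"
  proof -
    have "((\<lambda>h. (F (t0 + h) - F t0) / h - D) \<longlongrightarrow> D - D) (at 0)"
      using D unfolding DERIV_def by (intro tendsto_diff tendsto_const)
    moreover have "\<forall>\<^sub>F h in at 0. (F (t0 + h) - F t0) / h - D = R h / h"
      unfolding eventually_at_filter by (intro always_eventually) (auto simp: R_def field_simps)
    ultimately show ?thesis using Lim_transform_eventually by fastforce
  qed
  obtain K where K: "\<And>h. \<bar>R h\<bar> \<le> K * \<bar>h\<bar>" and K0: "K \<ge> 0"
  proof -
    obtain \<delta> where \<delta>: "\<delta> > 0" and h\<delta>: "\<And>h. h \<noteq> 0 \<and> norm (h - 0) < \<delta> \<longrightarrow> norm (R h / h - 0) < 1"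
      using LIM_D[OF Q, of 1] by auto
    define K where "K = 1 + 2*Bd/\<delta> + \<bar>D\<bar>"
    have K1: "K \<ge> 1" unfolding K_def using Bd0 \<delta> by simp
    have "\<bar>R h\<bar> \<le> K * \<bar>h\<bar>" for h
    proof (cases "h = 0")
      case True then show ?thesis by (simp add: R0)
    next
      case h0: False
      show ?thesis
      proof (cases "\<bar>h\<bar> < \<delta>")
        case True
        with h\<delta>[of h] h0 have "\<bar>R h / h\<bar> < 1" by simp
        then have "\<bar>R h\<bar> < \<bar>h\<bar>" using h0 by (simp add: abs_divide divide_less_eq)
        moreover have "\<bar>h\<bar> \<le> K * \<bar>h\<bar>" using K1 by (simp add: mult_le_cancel_right1)
        ultimately show ?thesis by linarith
      next
        case False
        have "\<bar>R h\<bar> \<le> \<bar>F (t0+h)\<bar> + \<bar>F t0\<bar> + \<bar>D\<bar> * \<bar>h\<bar>" unfolding R_def by (simp add: abs_mult[symmetric] abs_triangle_ineq4 abs_diff_le_iff) (smt (verit) abs_mult)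
        also have "\<dots> \<le> 2*Bd + \<bar>D\<bar> * \<bar>h\<bar>" using Fb[of "t0+h"] Fb[of t0] by simp
        also have "2*Bd \<le> 2*Bd/\<delta> * \<bar>h\<bar>"
        proof -
          have "2*Bd/\<delta> * \<delta> \<le> 2*Bd/\<delta> * \<bar>h\<bar>" using False Bd0 \<delta> by (intro mult_left_mono) auto
          then show ?thesis using \<delta> by simp
        qed
        finally have "\<bar>R h\<bar> \<le> (2*Bd/\<delta> + \<bar>D\<bar>) * \<bar>h\<bar>" by (simp add: algebra_simps)
        also have "\<dots> \<le> K * \<bar>h\<bar>" unfolding K_def by (intro mult_right_mono) auto
        finally show ?thesis .
      qed
    qed
    then show ?thesis using that[of K] K1 by simp
  qed

  define s where "s k x = complex_of_real (b^k * R (\<sigma>*x/b^k)) * rk \<sigma> x" for k x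
  have s_m: "s k \<in> borel_measurable NN" for k
    unfolding mNN s_def R_def by measurable
  have s_lim: "(\<lambda>k. s k x) \<longlonglongrightarrow> 0" for x
  proof (cases "x = 0")
    case True then show ?thesis by (simp add: s_def R0)
  next
    case x0: False
    have hk: "filterlim (\<lambda>k. \<sigma>*x/b^k) (at 0) sequentially"
      by (rule filterlim_atI) (use LIMSEQ_divide_realpow_zero[OF b1, of "\<sigma>*x"] x0 \<sigma> b1 in auto)
    have "(\<lambda>k. R (\<sigma>*x/b^k) / (\<sigma>*x/b^k)) \<longlonglongrightarrow> 0"
      by (rule filterlim_compose[OF Q hk])
    then have "(\<lambda>k. (\<sigma>*x) * (R (\<sigma>*x/b^k) / (\<sigma>*x/b^k))) \<longlonglongrightarrow> 0"
      by (rule tendsto_mult_right_zero)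
    moreover have "(\<sigma>*x) * (R (\<sigma>*x/b^k) / (\<sigma>*x/b^k)) = b^k * R (\<sigma>*x/b^k)" for k
      using x0 \<sigma> b1 by (simp add: field_simps)
    ultimately have "(\<lambda>k. b^k * R (\<sigma>*x/b^k)) \<longlonglongrightarrow> 0" by simp
    from tendsto_of_real[OF this, where 'a=complex]
    have "(\<lambda>k. complex_of_real (b^k * R (\<sigma>*x/b^k))) \<longlonglongrightarrow> 0" by simp
    then show ?thesis unfolding s_def by (rule tendsto_mult_left_zero)
  qed
  have s_bnd: "norm (s k x) \<le> 4 * K * \<sigma> * \<bar>x\<bar>" for k x
  proof -
    have bk: "b^k > 0" using b1 by simp
    have r: "\<bar>R (\<sigma>*x/b^k)\<bar> \<le> K * \<bar>\<sigma>*x/b^k\<bar>" by (rule K)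
    have e: "\<bar>b^k * R (\<sigma>*x/b^k)\<bar> = b^k * \<bar>R (\<sigma>*x/b^k)\<bar>" using bk by (simp add: abs_mult)
    have "\<bar>b^k * R (\<sigma>*x/b^k)\<bar> \<le> b^k * (K * \<bar>\<sigma>*x/b^k\<bar>)"
      unfolding e by (rule mult_left_mono[OF r]) (use bk in simp)
    also have "\<dots> = K * \<sigma> * \<bar>x\<bar>" using bk \<sigma> b1 by (simp add: abs_mult abs_divide)
    finally have A: "\<bar>b^k * R (\<sigma>*x/b^k)\<bar> \<le> K * \<sigma> * \<bar>x\<bar>" .
    have "norm (s k x) = \<bar>b^k * R (\<sigma>*x/b^k)\<bar> * cmod (rk \<sigma> x)" unfolding s_def norm_mult norm_of_real by (rule refl)
    also have "\<dots> \<le> (K * \<sigma> * \<bar>x\<bar>) * 4" using A norm_rk[of \<sigma> x] by (intro mult_mono) auto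
    finally show ?thesis by (simp add: algebra_simps)
  qed
  have lim_int: "(\<lambda>k. CLINT x|NN. s k x) \<longlonglongrightarrow> (CLINT x|NN. 0)"
    by (rule integral_dominated_convergence[where w="\<lambda>x. 4 * K * \<sigma> * \<bar>x\<bar>"])
       (use s_m s_lim s_bnd intabs in auto)
  then have lim0: "(\<lambda>k. CLINT x|NN. s k x) \<longlonglongrightarrow> 0" by simp

  define G where "G k x = complex_of_real (F (t0 + \<sigma>*x/b^k)) * rk \<sigma> x" for k x
  have G_int: "integrable NN (G k)" for k
  proof (rule bnd_int[where B="Bd * 4"])
    show "G k \<in> borel_measurable borel" unfolding G_def by measurable
    show "norm (G k x) \<le> Bd * 4" for x
      unfolding G_def norm_mult using Fb norm_rk[of \<sigma> x] Bd0 by (simp add: mult_mono)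
  qed
  have int_eq: "(CLINT x|NN. s k x) = complex_of_real (b^k) * (CLINT x|NN. G k x)" for k
  proof -
    have "s k x = complex_of_real (b^k) * (G k x - complex_of_real (F t0) * rk \<sigma> x
                  - complex_of_real (D*\<sigma>/b^k) * (complex_of_real x * rk \<sigma> x))" for x
      using b1 unfolding s_def G_def R_def by (simp add: field_simps)
    then have "(CLINT x|NN. s k x) = (CLINT x|NN. complex_of_real (b^k) * (G k x - complex_of_real (F t0) * rk \<sigma> x
                  - complex_of_real (D*\<sigma>/b^k) * (complex_of_real x * rk \<sigma> x)))" by simp
    also have "\<dots> = complex_of_real (b^k) * ((CLINT x|NN. G k x) - complex_of_real (F t0) * (CLINT x|NN. rk \<sigma> x)
                  - complex_of_real (D*\<sigma>/b^k) * (CLINT x|NN. complex_of_real x * rk \<sigma> x))"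
      by (simp add: G_int Bochner_Integration.integral_diff)
    also have "\<dots> = complex_of_real (b^k) * (CLINT x|NN. G k x)" by (simp add: rk_int0 rk_moment0)
    finally show ?thesis .
  qed

  define X where "X k j = JJ \<sigma> \<omega> (b^j*t0) (\<sigma>*b^j/b^k)" for k j
  have series: "(CLINT x|NN. G k x) = (\<Sum>j. complex_of_real (c^j) * X k j)"
    and series_sum: "summable (\<lambda>j. complex_of_real (c^j) * X k j)" for k
  proof -
    define f where "f j x = complex_of_real (c^j * Re (\<omega> * iexp (b^j * (t0 + \<sigma>*x/b^k)))) * rk \<sigma> x" for j x
    have fb: "norm (f j x) \<le> 4 * c^j" for j x
    proof -
      have "norm (f j x) = \<bar>c^j * Re (\<omega> * iexp (b^j * (t0 + \<sigma>*x/b^k)))\<bar> * cmod (rk \<sigma> x)"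
        unfolding f_def norm_mult norm_of_real by (rule refl)
      also have "\<dots> \<le> c^j * 4" using FF_tb(3)[OF \<omega>1 c(1), of j b "t0 + \<sigma>*x/b^k"] norm_rk[of \<sigma> x] c by (intro mult_mono) auto
      finally show ?thesis by simp
    qed
    have fi: "integrable NN (f j)" for j
    proof (rule bnd_int[where B="4 * c^j"])
      have "continuous_on UNIV (f j)" unfolding f_def[abs_def] using b1 by (intro continuous_intros rk_cont) auto
      then show "f j \<in> borel_measurable borel" by (rule borel_measurable_continuous_onI)
      show "norm (f j x) \<le> 4 * c^j" for x by (rule fb)
    qed
    have g: "summable (\<lambda>j. 4 * c^j)" using c by (intro summable_mult summable_geometric) auto
    have A1: "AE x in NN. summable (\<lambda>j. norm (f j x))"
      by (intro always_eventually allI summable_comparison_test'[OF g]) (use fb in auto)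
    have A2: "summable (\<lambda>j. (\<integral>x. norm (f j x) \<partial>NN))"
    proof (rule summable_comparison_test'[OF g])
      fix j
      have "(\<integral>x. norm (f j x) \<partial>NN) \<le> 4 * c^j"
        by (rule prob_space.integral_le_const[OF prob_NN]) (use fi fb in auto)
      moreover have "(\<integral>x. norm (f j x) \<partial>NN) \<ge> 0" by simp
      ultimately show "norm (\<integral>x. norm (f j x) \<partial>NN) \<le> 4 * c^j" by simp
    qed
    have Geq: "G k x = (\<Sum>j. f j x)" for x
    proof -
      have sm: "summable (\<lambda>j. c^j * Re (\<omega> * iexp (b^j * (t0 + \<sigma>*x/b^k))))" by (rule FF_summable(1)[OF \<omega>1 c])
      have "G k x = complex_of_real (\<Sum>j. c^j * Re (\<omega> * iexp (b^j * (t0 + \<sigma>*x/b^k)))) * rk \<sigma> x"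
        unfolding G_def F_def FF_def ..
      also have "\<dots> = (\<Sum>j. complex_of_real (c^j * Re (\<omega> * iexp (b^j * (t0 + \<sigma>*x/b^k))))) * rk \<sigma> x"
        by (simp only: suminf_of_real[OF sm])
      also have "\<dots> = (\<Sum>j. f j x)" unfolding f_def
        by (rule suminf_mult2) (rule summable_of_real[OF sm])
      finally show ?thesis .
    qed
    have fint: "(CLINT x|NN. f j x) = complex_of_real (c^j) * X k j" for j
    proof -
      have "f j x = complex_of_real (c^j) * (complex_of_real (Re (\<omega> * iexp (b^j*t0 + (\<sigma>*b^j/b^k)*x))) * rk \<sigma> x)" for x
      proof -
        have "b^j * (t0 + \<sigma>*x/b^k) = b^j*t0 + (\<sigma>*b^j/b^k)*x" by (simp add: algebra_simps)
        then show ?thesis unfolding f_def by simp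
      qed
      then have "(CLINT x|NN. f j x) = (CLINT x|NN. complex_of_real (c^j) * (complex_of_real (Re (\<omega> * iexp (b^j*t0 + (\<sigma>*b^j/b^k)*x))) * rk \<sigma> x))"
        by simp
      also have "\<dots> = complex_of_real (c^j) * X k j" unfolding X_def by (simp only: integral_mult_right_zero int_Re)
      finally show ?thesis .
    qed
    have "(CLINT x|NN. G k x) = (CLINT x|NN. (\<Sum>j. f j x))" by (simp only: Geq)
    also have "\<dots> = (\<Sum>j. (CLINT x|NN. f j x))" by (rule integral_suminf[OF fi A1 A2])
    finally show "(CLINT x|NN. G k x) = (\<Sum>j. complex_of_real (c^j) * X k j)" by (simp only: fint)
    show "summable (\<lambda>j. complex_of_real (c^j) * X k j)"
      using summable_integral[OF fi A1 A2] by (simp only: fint)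
  qed

  have big: "norm (CLINT x|NN. s k x) \<ge> 1/4" for k
  proof -
    have "norm (CLINT x|NN. s k x) = b^k * cmod (\<Sum>j. complex_of_real (c^j) * X k j)"
      unfolding int_eq series norm_mult norm_of_real using b1 by simp
    also have "\<dots> \<ge> a^k * cmod (\<Sum>j. complex_of_real (c^j) * X k j)"
      using ab by (intro mult_right_mono power_mono) auto
    finally have "norm (CLINT x|NN. s k x) \<ge> cmod (complex_of_real (a^k) * (\<Sum>j. complex_of_real (c^j) * X k j))"
      using a0 unfolding norm_mult norm_of_real by simp
    also have "complex_of_real (a^k) * (\<Sum>j. complex_of_real (c^j) * X k j) = (\<Sum>j. complex_of_real (a^k) * (complex_of_real (c^j) * X k j))"
      by (rule suminf_mult[symmetric, OF series_sum])
    also have "\<dots> = (\<Sum>j. complex_of_real (a^k / a^j) * JJ \<sigma> \<omega> (b^j*t0) (\<sigma>*b^j/b^k))"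
      unfolding X_def c_def by (simp add: power_one_over mult.assoc[symmetric] divide_inverse power_inverse)
    finally show ?thesis using lower_bound[OF ab \<sigma> \<omega> h\<alpha> hq hC, of k t0] by linarith
  qed
  obtain no where "\<forall>n\<ge>no. norm ((CLINT x|NN. s n x) - 0) < 1/4"
    using LIMSEQ_D[OF lim0, of "1/4"] by auto
  then have "norm (CLINT x|NN. s no x) < 1/4" by auto
  with big[of no] show False by linarith
qed


lemma Re_iexp: "Re (iexp y) = cos y" by (simp add: Re_exp)
lemma Re_miexp: "Re (-\<i> * iexp y) = sin y" by (simp add: Im_exp)

lemma powr_eq: assumes "a > 0" shows "a powr (- real j) = (1/a)^j"
  using assms by (simp add: powr_minus powr_realpow power_one_over inverse_eq_divide)

theorem theorem1p1:
  fixes a b :: real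
  assumes "1 < a" and "a \<le> b"
  shows "bounded (range (weierstrass_W a b)) \<and> continuous_on UNIV (weierstrass_W a b)
       \<and> bounded (range (weierstrass_S a b)) \<and> continuous_on UNIV (weierstrass_S a b)
       \<and> (\<forall>t0. \<not> weierstrass_W a b differentiable (at t0))
       \<and> (\<forall>t0. \<not> weierstrass_S a b differentiable (at t0))"
proof -
  have a0: "a > 0" using assms by simp
  have W: "weierstrass_W a b = FF (1/a) b 1"
    unfolding weierstrass_W_def FF_def by (rule ext) (simp add: powr_eq[OF a0] Re_exp Im_exp)
  have S: "weierstrass_S a b = FF (1/a) b (-\<i>)"
    unfolding weierstrass_S_def FF_def by (rule ext) (simp add: powr_eq[OF a0] Re_exp Im_exp)
  have c: "0 \<le> 1/a" "1/a < 1" using assms by auto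
  have bnd: "bounded (range (FF (1/a) b \<omega>))" if "cmod \<omega> \<le> 1" for \<omega>
    unfolding bounded_iff using FF_bound[OF that c] by auto
  show ?thesis unfolding W S
    using bnd FF_cont[OF _ c] FF_nondiff[OF assms] by auto
qed

end
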